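(* Let $\mathcal H$ be a separable complex Hilbert space, $C\in L(\mathcal H)$, $A=C^*C$, and $\mathcal S$ a closed subspace such that $(A,\mathcal S)$ is compatible. Then for every nonzero $x\in\mathcal H$, $$sp(C,\mathcal S,x)=\{(I-T)x:\ T\in\Pi(A,\mathcal S)\}.$$
   Context: $sp(C,\mathcal S,x)=\{y\in x+\mathcal S:\ \|Cy\|=\inf_{s\in\mathcal S}\|C(x+s)\|\}$ (the set of abstract splines). $(A,\mathcal S)$ is compatible if there exists $Q\in L(\mathcal H)$ with $Q^2=Q$, $R(Q)=\mathcal S$, $AQ=Q^*A$. $\Pi(A,\mathcal S)$ is the set of $T\in L(\mathcal H)$ with $R(T)\subseteq\mathcal S$ and $\|y-Ty\|_A\le\|y-s\|_A$ for all $y\in\mathcal H$, $s\in\mathcal S$, where $\|z\|_A=\langle Az,z\rangle^{1/2}$. *)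

theory Defs
  imports "HOL-Analysis.Analysis"
begin

text \<open>The library only has real inner product spaces, so we
introduce a class of complex Hilbert spaces: a Banach space (complete normed space,
whose real scalar multiplication is the restriction of a complex one) carrying a
complex inner product, linear in the second argument and conjugate-linear in the first,
that induces the norm.\<close>

class chilbert_space = banach +
  fixes scaleC :: "complex \<Rightarrow> 'a \<Rightarrow> 'a" (infixr "*\<^sub>C" 75)
    and cinner :: "'a \<Rightarrow> 'a \<Rightarrow> complex"
  assumes scaleC_add_right: "a *\<^sub>C (x + y) = a *\<^sub>C x + a *\<^sub>C y"
    and scaleC_add_left: "(a + b) *\<^sub>C x = a *\<^sub>C x + b *\<^sub>C x"
    and scaleC_scaleC: "a *\<^sub>C (b *\<^sub>C x) = (a * b) *\<^sub>C x"
    and scaleC_one: "1 *\<^sub>C x = x"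
    and scaleR_scaleC: "scaleR r x = complex_of_real r *\<^sub>C x"
    and cinner_add_right: "cinner x (y + z) = cinner x y + cinner x z"
    and cinner_scaleC_right: "cinner x (a *\<^sub>C y) = a * cinner x y"
    and cinner_commute: "cinner y x = cnj (cinner x y)"
    and cinner_norm: "cinner x x = complex_of_real ((norm x)\<^sup>2)"

definition cbounded_linear :: "('a::chilbert_space \<Rightarrow> 'a) \<Rightarrow> bool" where
  "cbounded_linear T \<longleftrightarrow>
     (\<forall>x y. T (x + y) = T x + T y) \<and> (\<forall>c x. T (c *\<^sub>C x) = c *\<^sub>C T x) \<and>
     (\<exists>K. \<forall>x. norm (T x) \<le> norm x * K)"

definition is_adjoint :: "('a::chilbert_space \<Rightarrow> 'a) \<Rightarrow> ('a \<Rightarrow> 'a) \<Rightarrow> bool" where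
  "is_adjoint T Ts \<longleftrightarrow> (\<forall>x y. cinner (T x) y = cinner x (Ts y))"

definition closed_csubspace :: "'a::chilbert_space set \<Rightarrow> bool" where
  "closed_csubspace S \<longleftrightarrow> 0 \<in> S \<and> (\<forall>x\<in>S. \<forall>y\<in>S. x + y \<in> S) \<and>
     (\<forall>c. \<forall>x\<in>S. c *\<^sub>C x \<in> S) \<and> closed S"

definition sp :: "('a::chilbert_space \<Rightarrow> 'a) \<Rightarrow> 'a set \<Rightarrow> 'a \<Rightarrow> 'a set" where
  "sp C S x = {y \<in> (\<lambda>s. x + s) ` S. norm (C y) = (INF s\<in>S. norm (C (x + s)))}"

definition compatible :: "('a::chilbert_space \<Rightarrow> 'a) \<Rightarrow> 'a set \<Rightarrow> bool" where
  "compatible A S \<longleftrightarrow> (\<exists>Q Qs. cbounded_linear Q \<and> Q \<circ> Q = Q \<and> range Q = S \<and>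
      is_adjoint Q Qs \<and> A \<circ> Q = Qs \<circ> A)"

text \<open>The A-seminorm, with A positive so that the inner product is real.\<close>
definition normA :: "('a::chilbert_space \<Rightarrow> 'a) \<Rightarrow> 'a \<Rightarrow> real" where
  "normA A z = sqrt (Re (cinner (A z) z))"

definition Pi_set :: "('a::chilbert_space \<Rightarrow> 'a) \<Rightarrow> 'a set \<Rightarrow> ('a \<Rightarrow> 'a) set" where
  "Pi_set A S = {T. cbounded_linear T \<and> range T \<subseteq> S \<and>
      (\<forall>y. \<forall>s\<in>S. normA A (y - T y) \<le> normA A (y - s))}"

end

theory Submission
  imports Defs
begin

declare of_real_power[simp del]

lemma cinner_zero_right: "cinner (x::'a::chilbert_space) 0 = 0"
  using cinner_add_right[of x 0 0] by simp
lemma cinner_zero_left: "cinner 0 (x::'a::chilbert_space) = 0"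
  using cinner_commute[of 0 x] by (simp add: cinner_zero_right)
lemma cinner_add_left: "cinner ((x::'a::chilbert_space) + y) z = cinner x z + cinner y z"
  by (metis cinner_commute cinner_add_right complex_cnj_add)
lemma cinner_minus_right: "cinner (x::'a::chilbert_space) (- y) = - cinner x y"
  using cinner_add_right[of x y "-y"] by (simp add: cinner_zero_right) (metis add.commute eq_neg_iff_add_eq_0)
lemma cinner_diff_right: "cinner (x::'a::chilbert_space) (y - z) = cinner x y - cinner x z"
  using cinner_add_right[of x y "-z"] by (simp add: cinner_minus_right)
lemma cinner_minus_left: "cinner (- x::'a::chilbert_space) y = - cinner x y"
  by (metis cinner_commute cinner_minus_right complex_cnj_minus)
lemma cinner_diff_left: "cinner ((x::'a::chilbert_space) - y) z = cinner x z - cinner y z"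
  using cinner_add_left[of x "-y" z] by (simp add: cinner_minus_left)
lemma cinner_scaleC_left: "cinner (a *\<^sub>C (x::'a::chilbert_space)) y = cnj a * cinner x y"
  by (metis cinner_commute cinner_scaleC_right complex_cnj_mult)
lemma scaleC_zero_right: "a *\<^sub>C (0::'a::chilbert_space) = 0"
  using scaleC_add_right[of a "0::'a" 0] by simp
lemma scaleC_minus1: "(-1) *\<^sub>C (x::'a::chilbert_space) = - x"
  using scaleR_scaleC[of "-1" x] by simp
lemma norm_sq: "complex_of_real ((norm (x::'a::chilbert_space))\<^sup>2) = cinner x x"
  by (simp add: cinner_norm)

lemma pythag:
  fixes a b :: "'a::chilbert_space"
  assumes "cinner a b = 0"
  shows "(norm (a + b))\<^sup>2 = (norm a)\<^sup>2 + (norm b)\<^sup>2"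
proof -
  have "complex_of_real ((norm (a + b))\<^sup>2) = cinner a a + cinner a b + cinner b a + cinner b b"
    by (simp add: norm_sq cinner_add_left cinner_add_right)
  also have "\<dots> = complex_of_real ((norm a)\<^sup>2 + (norm b)\<^sup>2)"
    using assms cinner_commute[of b a] by (simp add: norm_sq)
  finally show ?thesis by (simp only: of_real_eq_iff)
qed

lemma cauchy_schwarz:
  fixes x z :: "'a::chilbert_space"
  shows "cmod (cinner x z) \<le> norm x * norm z"
proof (cases "x = 0")
  case True then show ?thesis by (simp add: cinner_zero_left)
next
  case False
  define n where "n = (norm x)\<^sup>2"
  have n: "n > 0" using False by (simp add: n_def)
  define a where "a = cinner x z"
  define t where "t = a / complex_of_real n"
  define p where "p = z - t *\<^sub>C x"
  have xx: "cinner x x = complex_of_real n" by (simp add: n_def norm_sq)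
  have xp: "cinner x p = 0"
    using n by (simp add: p_def cinner_diff_right cinner_scaleC_right xx t_def a_def)
  have px: "cinner p x = 0" using xp cinner_commute[of p x] by simp
  have "z = t *\<^sub>C x + p" by (simp add: p_def)
  hence "complex_of_real ((norm z)\<^sup>2) = cinner (t *\<^sub>C x + p) (t *\<^sub>C x + p)"
    by (simp add: norm_sq)
  also have "\<dots> = cinner (t *\<^sub>C x) (t *\<^sub>C x) + cinner (t *\<^sub>C x) p + (cinner p (t *\<^sub>C x) + cinner p p)"
    by (simp only: cinner_add_left cinner_add_right add_ac)
  also have "\<dots> = cnj t * t * complex_of_real n + cinner p p"
    by (simp only: cinner_scaleC_left cinner_scaleC_right xp px xx mult_zero_right add_0_left add_0_right mult.assoc mult.left_commute)
  also have "\<dots> = complex_of_real ((cmod t)\<^sup>2 * n + (norm p)\<^sup>2)"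
  proof -
    have "cnj t * t = complex_of_real ((cmod t)\<^sup>2)"
      using complex_norm_square[of t] by (simp add: of_real_power mult.commute)
    thus ?thesis by (simp add: cinner_norm)
  qed
  finally have "(norm z)\<^sup>2 = (cmod t)\<^sup>2 * n + (norm p)\<^sup>2" by (simp only: of_real_eq_iff)
  hence ineq: "(cmod t)\<^sup>2 * n \<le> (norm z)\<^sup>2" by simp
  have ta: "cmod a = cmod t * n" using n by (simp add: t_def norm_divide)
  have "(cmod a)\<^sup>2 = ((cmod t)\<^sup>2 * n) * n" by (simp add: ta power2_eq_square)
  also have "\<dots> \<le> (norm z)\<^sup>2 * n" using ineq n by (simp add: mult_right_mono)
  also have "\<dots> = (norm x * norm z)\<^sup>2" by (simp add: n_def power_mult_distrib)
  finally have "(cmod a)\<^sup>2 \<le> (norm x * norm z)\<^sup>2" .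
  thus ?thesis unfolding a_def by (rule power2_le_imp_le) simp
qed

lemma norm_scaleC: "norm (a *\<^sub>C (x::'a::chilbert_space)) = cmod a * norm x"
proof -
  have "complex_of_real ((norm (a *\<^sub>C x))\<^sup>2) = cnj a * a * cinner x x"
    by (simp add: norm_sq cinner_scaleC_left cinner_scaleC_right)
  also have "\<dots> = complex_of_real ((cmod a * norm x)\<^sup>2)"
    by (simp add: norm_sq power_mult_distrib complex_norm_square mult.commute)
  finally have "(norm (a *\<^sub>C x))\<^sup>2 = (cmod a * norm x)\<^sup>2" by (simp only: of_real_eq_iff)
  thus ?thesis by (simp add: power2_eq_iff_nonneg)
qed

lemma cbl_add: "cbounded_linear T \<Longrightarrow> T (x + y) = T x + T y"
  by (simp add: cbounded_linear_def)
lemma cbl_scale: "cbounded_linear T \<Longrightarrow> T (c *\<^sub>C x) = c *\<^sub>C T x"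
  by (simp add: cbounded_linear_def)
lemma cbl_zero: "cbounded_linear T \<Longrightarrow> T 0 = 0"
  using cbl_add[of T 0 0] by simp
lemma cbl_minus: "cbounded_linear T \<Longrightarrow> T (- x) = - T x"
  using cbl_add[of T x "-x"] cbl_zero[of T] by simp (metis add.commute eq_neg_iff_add_eq_0)
lemma cbl_diff: "cbounded_linear T \<Longrightarrow> T (x - y) = T x - T y"
  using cbl_add[of T x "-y"] cbl_minus[of T y] by simp
lemma cbl_bound: "cbounded_linear T \<Longrightarrow> \<exists>K\<ge>0. \<forall>x. norm (T x) \<le> norm x * K"
proof -
  assume "cbounded_linear T"
  then obtain K where K: "\<forall>x. norm (T x) \<le> norm x * K" by (auto simp: cbounded_linear_def)
  have "\<forall>x. norm (T x) \<le> norm x * max K 0"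
    by (metis K max.cobounded1 mult_left_mono norm_ge_zero order_trans)
  thus ?thesis by (intro exI[of _ "max K 0"]) auto
qed

lemma cbl_comp:
  assumes "cbounded_linear Q" "cbounded_linear g"
  shows "cbounded_linear (Q \<circ> g)"
proof -
  obtain K1 where K1: "K1 \<ge> 0" "\<forall>x. norm (Q x) \<le> norm x * K1" using cbl_bound[OF assms(1)] by blast
  obtain K2 where K2: "K2 \<ge> 0" "\<forall>x. norm (g x) \<le> norm x * K2" using cbl_bound[OF assms(2)] by blast
  have "\<forall>x. norm (Q (g x)) \<le> norm x * (K2 * K1)"
  proof
    fix x
    have "norm (Q (g x)) \<le> norm (g x) * K1" using K1 by blast
    also have "\<dots> \<le> norm x * K2 * K1" using K1 K2 by (simp add: mult_right_mono)
    finally show "norm (Q (g x)) \<le> norm x * (K2 * K1)" by (simp add: mult.assoc)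
  qed
  thus ?thesis using assms by (auto simp: cbounded_linear_def)
qed

lemma rank1_cbl:
  fixes x e :: "'a::chilbert_space"
  assumes "x \<noteq> 0"
  shows "cbounded_linear (\<lambda>z. z - (cinner x z / cinner x x) *\<^sub>C e)"
proof -
  have xx: "cinner x x = complex_of_real ((norm x)\<^sup>2)" by (simp add: norm_sq)
  have add: "\<forall>y z. (y + z) - (cinner x (y + z) / cinner x x) *\<^sub>C e
     = (y - (cinner x y / cinner x x) *\<^sub>C e) + (z - (cinner x z / cinner x x) *\<^sub>C e)"
    by (simp add: cinner_add_right add_divide_distrib scaleC_add_left)
  have sc: "\<forall>c z. (c *\<^sub>C z) - (cinner x (c *\<^sub>C z) / cinner x x) *\<^sub>C e
     = c *\<^sub>C (z - (cinner x z / cinner x x) *\<^sub>C e)"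
  proof (intro allI)
    fix c z
    have "c *\<^sub>C (z - (cinner x z / cinner x x) *\<^sub>C e)
       = c *\<^sub>C z + c *\<^sub>C ((-1) *\<^sub>C ((cinner x z / cinner x x) *\<^sub>C e))"
      by (simp add: scaleC_minus1 scaleC_add_right[symmetric])
    also have "\<dots> = c *\<^sub>C z - (cinner x (c *\<^sub>C z) / cinner x x) *\<^sub>C e"
      by (simp add: scaleC_scaleC cinner_scaleC_right scaleC_minus1[symmetric])
    finally show "(c *\<^sub>C z) - (cinner x (c *\<^sub>C z) / cinner x x) *\<^sub>C e
     = c *\<^sub>C (z - (cinner x z / cinner x x) *\<^sub>C e)" by simp
  qed
  have bd: "\<forall>z. norm (z - (cinner x z / cinner x x) *\<^sub>C e) \<le> norm z * (1 + norm e / norm x)"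
  proof
    fix z
    have "norm (z - (cinner x z / cinner x x) *\<^sub>C e) \<le> norm z + cmod (cinner x z / cinner x x) * norm e"
      by (metis norm_scaleC norm_triangle_ineq4)
    also have "cmod (cinner x z / cinner x x) = cmod (cinner x z) / (norm x)\<^sup>2"
      by (simp add: xx norm_divide)
    also have "\<dots> \<le> norm x * norm z / (norm x)\<^sup>2"
      by (simp add: cauchy_schwarz divide_right_mono)
    also have "norm x * norm z / (norm x)\<^sup>2 = norm z / norm x" using assms
      by (simp add: power2_eq_square)
    finally have "norm (z - (cinner x z / cinner x x) *\<^sub>C e) \<le> norm z + norm z / norm x * norm e"
      by (simp add: mult_right_mono)
    thus "norm (z - (cinner x z / cinner x x) *\<^sub>C e) \<le> norm z * (1 + norm e / norm x)"
      by (simp add: algebra_simps)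
  qed
  show ?thesis unfolding cbounded_linear_def using add sc bd by blast
qed


lemma normA_eq:
  assumes "is_adjoint C Cs"
  shows "normA (Cs \<circ> C) z = norm (C z)"
proof -
  have "cinner (Cs (C z)) z = cnj (cinner z (Cs (C z)))" by (rule cinner_commute)
  also have "cinner z (Cs (C z)) = cinner (C z) (C z)"
    using assms by (simp add: is_adjoint_def)
  also have "\<dots> = complex_of_real ((norm (C z))\<^sup>2)" by (rule cinner_norm)
  finally have "Re (cinner ((Cs \<circ> C) z) z) = (norm (C z))\<^sup>2" by simp
  thus ?thesis by (simp add: normA_def)
qed

lemma proj_orth:
  assumes C: "is_adjoint C Cs" and Q: "cbounded_linear Q" and QQ: "Q \<circ> Q = Q"
    and Qa: "is_adjoint Q Qs" and comm: "(Cs \<circ> C) \<circ> Q = Qs \<circ> (Cs \<circ> C)"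
  shows "cinner (C (y - Q y)) (C (Q u)) = 0"
proof -
  have "cinner (C (y - Q y)) (C (Q u)) = cinner (y - Q y) (Cs (C (Q u)))"
    using C by (simp add: is_adjoint_def)
  also have "Cs (C (Q u)) = Qs (Cs (C u))" using fun_cong[OF comm, of u] by simp
  also have "cinner (y - Q y) (Qs (Cs (C u))) = cinner (Q (y - Q y)) (Cs (C u))"
    using Qa by (simp add: is_adjoint_def)
  also have "Q (y - Q y) = 0" using cbl_diff[OF Q, of y "Q y"] fun_cong[OF QQ, of y] by simp
  finally show ?thesis by (simp add: cinner_zero_left)
qed

lemma proj_min:
  assumes Cl: "cbounded_linear C" and C: "is_adjoint C Cs" and Q: "cbounded_linear Q" and QQ: "Q \<circ> Q = Q"
    and Qa: "is_adjoint Q Qs" and comm: "(Cs \<circ> C) \<circ> Q = Qs \<circ> (Cs \<circ> C)"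
  shows "norm (C (y - Q y)) \<le> norm (C (y - Q u))"
proof -
  have eq: "y - Q u = (y - Q y) + Q (y - u)" using cbl_diff[OF Q, of y u] by simp
  have "C (y - Q u) = C (y - Q y) + C (Q (y - u))" unfolding eq by (rule cbl_add[OF Cl])
  hence "(norm (C (y - Q u)))\<^sup>2 = (norm (C (y - Q y)))\<^sup>2 + (norm (C (Q (y - u))))\<^sup>2"
    using pythag[OF proj_orth[OF C Q QQ Qa comm, of y "y - u"]] by simp
  hence "(norm (C (y - Q y)))\<^sup>2 \<le> (norm (C (y - Q u)))\<^sup>2" by simp
  thus ?thesis by (rule power2_le_imp_le) simp
qed

theorem mainTheorem11:
  fixes C Cs :: "'a::chilbert_space \<Rightarrow> 'a" and S :: "'a set" and x :: 'a
  assumes "separable_space (euclidean :: 'a topology)"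
    and "cbounded_linear C"
    and "is_adjoint C Cs"
    and "closed_csubspace S"
    and "compatible (Cs \<circ> C) S"
    and "x \<noteq> 0"
  shows "sp C S x = {x - T x | T. T \<in> Pi_set (Cs \<circ> C) S}"
proof -
  note Cl = assms(2) and Ca = assms(3) and SS = assms(4) and x0 = assms(6)
  obtain Q Qs where Q: "cbounded_linear Q" and QQ: "Q \<circ> Q = Q" and rQ: "range Q = S"
    and Qa: "is_adjoint Q Qs" and comm: "(Cs \<circ> C) \<circ> Q = Qs \<circ> (Cs \<circ> C)"
    using assms(5) unfolding compatible_def by blast
  have S0: "0 \<in> S" using SS by (simp add: closed_csubspace_def)
  have Sneg: "- v \<in> S" if "v \<in> S" for v
    using SS that scaleC_minus1[of v] by (metis closed_csubspace_def)
  have bdd: "bdd_below ((\<lambda>s. norm (C (x + s))) ` S)"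
    by (rule bdd_belowI[of _ 0]) auto
  show ?thesis
  proof (rule set_eqI, rule iffI)
    fix y assume "y \<in> sp C S x"
    then obtain s0 where s0: "s0 \<in> S" and y: "y = x + s0"
      and yn: "norm (C y) = (INF s\<in>S. norm (C (x + s)))"
      unfolding sp_def by blast
    obtain e0 where e0: "s0 = Q e0" using s0 rQ by blast
    have "Q (- x) \<in> S" using rQ by blast
    hence "norm (C y) \<le> norm (C (x + Q (- x)))" unfolding yn by (rule cINF_lower[OF bdd])
    also have "x + Q (- x) = x - Q x" using cbl_minus[OF Q, of x] by simp
    finally have le: "norm (C y) \<le> norm (C (x - Q x))" .
    define e where "e = x + e0"
    define d where "d = Q e"
    have dQ: "d = Q x + s0" unfolding d_def e_def e0 by (rule cbl_add[OF Q])
    have "y = (x - Q x) + d" using y dQ by simp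
    hence "C y = C (x - Q x) + C d" using cbl_add[OF Cl] by simp
    hence "(norm (C y))\<^sup>2 = (norm (C (x - Q x)))\<^sup>2 + (norm (C d))\<^sup>2"
      using pythag[OF proj_orth[OF Ca Q QQ Qa comm, of x e]] d_def by simp
    moreover have "(norm (C y))\<^sup>2 \<le> (norm (C (x - Q x)))\<^sup>2" using le by (simp add: power_mono)
    ultimately have Cd: "C d = 0" by simp
    define g where "g = (\<lambda>z. z - (cinner x z / cinner x x) *\<^sub>C e)"
    define T where "T = Q \<circ> g"
    have xx: "cinner x x \<noteq> 0" using x0 by (simp add: cinner_norm)
    have gx: "g x = - e0" using xx by (simp add: g_def scaleC_one e_def)
    have Tx: "T x = - s0" using gx cbl_minus[OF Q, of e0] e0 by (simp add: T_def)
    have Tcbl: "cbounded_linear T" unfolding T_def g_def by (rule cbl_comp[OF Q rank1_cbl[OF x0]])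
    have "T \<in> Pi_set (Cs \<circ> C) S"
      unfolding Pi_set_def
    proof (intro CollectI conjI ballI allI Tcbl)
      show "range T \<subseteq> S" using rQ by (auto simp: T_def)
    next
      fix y' s assume "s \<in> S"
      then obtain u where u: "s = Q u" using rQ by blast
      define c where "c = cinner x y' / cinner x x"
      have "T y' = Q y' - c *\<^sub>C d"
        by (simp add: T_def g_def c_def d_def cbl_diff[OF Q] cbl_scale[OF Q])
      hence yT: "y' - T y' = (y' - Q y') + c *\<^sub>C d" by simp
      have "C (y' - T y') = C (y' - Q y') + c *\<^sub>C C d"
        unfolding yT using cbl_add[OF Cl, of "y' - Q y'" "c *\<^sub>C d"] cbl_scale[OF Cl, of c d]
        by simp
      hence "C (y' - T y') = C (y' - Q y')" by (simp add: Cd scaleC_zero_right)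
      thus "normA (Cs \<circ> C) (y' - T y') \<le> normA (Cs \<circ> C) (y' - s)"
        using proj_min[OF Cl Ca Q QQ Qa comm, of y' u] u by (simp add: normA_eq[OF Ca])
    qed
    moreover have "y = x - T x" using y Tx by simp
    ultimately show "y \<in> {x - T x | T. T \<in> Pi_set (Cs \<circ> C) S}" by blast
  next
    fix z assume "z \<in> {x - T x | T. T \<in> Pi_set (Cs \<circ> C) S}"
    then obtain T where T: "T \<in> Pi_set (Cs \<circ> C) S" and z: "z = x - T x" by blast
    have TS: "- T x \<in> S" using T Sneg by (auto simp: Pi_set_def)
    have zimg: "z \<in> (\<lambda>s. x + s) ` S" using TS z by (intro image_eqI[of _ _ "- T x"]) auto
    have "(INF s\<in>S. norm (C (x + s))) \<le> norm (C (x + - T x))" using TS by (rule cINF_lower[OF bdd])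
    hence le1: "(INF s\<in>S. norm (C (x + s))) \<le> norm (C z)" using z by simp
    have le2: "norm (C z) \<le> (INF s\<in>S. norm (C (x + s)))"
    proof (rule cINF_greatest)
      show "S \<noteq> {}" using S0 by blast
    next
      fix s assume "s \<in> S"
      hence "normA (Cs \<circ> C) (x - T x) \<le> normA (Cs \<circ> C) (x - (- s))"
        using T Sneg[OF \<open>s \<in> S\<close>] unfolding Pi_set_def by blast
      thus "norm (C z) \<le> norm (C (x + s))" using z by (simp add: normA_eq[OF Ca])
    qed
    show "z \<in> sp C S x" unfolding sp_def using zimg le1 le2 by auto
  qed
qed

end
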